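(* Let $q\ge4$ be even, let $\alpha,\beta\in\mathbb{F}_{q^2}$ with $\alpha\neq0$, $\beta\notin\mathbb{F}_q$ and $\alpha^{q+1}/(\beta^q+\beta)^2$ of absolute trace $0$, and let $R=(0,\delta,1)$. Then (1) $\mathrm{pedal}(R)$ consists exactly of the points $Q_x=(x,\,\alpha x^2+\alpha^q x^{2q}+\delta^q,\,1)$ with $x\in\mathbb{F}_{q^2}$ satisfying $1+\alpha x^2+\alpha^q x^{2q}+(\beta+\beta^q)x^{q+1}=0$; (2) the points of $\mathrm{pedal}(R)$ are contained in the lines of the Baer pencil joining the vertex $U_\infty=(1,0,0)$ to the Baer subline $\{E_{s+\delta^q}=(0,s+\delta^q,1): s\in\mathbb{F}_q\}\cup\{(0,1,0)\}$.
   Context: Points of $\mathrm{PG}(2,q^2)$ have homogeneous coordinates $(x,y,z)$. $\delta\in\mathbb{F}_{q^2}\setminus\mathbb{F}_q$ satisfies $\delta^q=1+\delta$ and $\delta^2=v+\delta$ with $v\in\mathbb{F}_q$, $v\ne1$, of absolute trace $T(v)=v+v^2+\dots+v^{2^{h-1}}=1$ where $q=2^h$. $\mathcal U_{\alpha\beta}=\{(x,\alpha x^2+\beta x^{q+1}+r,1): x\in\mathbb{F}_{q^2}, r\in\mathbb{F}_q\}\cup\{(0,1,0)\}$, which under the hypotheses is a (non-classical) unital: a set of $q^3+1$ points meeting every line in $1$ or $q+1$ points. For a point $P$ not on the unital, $\mathrm{pedal}(P)$ is the set of points of contact of the $q+1$ tangent lines (lines meeting the unital in exactly one point) through $P$.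 A Baer pencil is the set of $q+1$ lines joining a vertex point to the $q+1$ points of a Baer subline (a set of points of a line projectively equivalent to $\mathrm{PG}(1,q)$). *)

theory Defs
  imports Main
begin

text \<open>The field F_{q^2} is modelled by a finite field type 'a with CARD('a) = q^2.
  Points of PG(2,q^2) are the classes of nonzero vectors under nonzero scalars.\<close>

definition proj_pt :: "'a::field \<Rightarrow> 'a \<Rightarrow> 'a \<Rightarrow> ('a \<times> 'a \<times> 'a) set" where
  "proj_pt x y z = {(c * x, c * y, c * z) | c. c \<noteq> 0}"

definition pg_points :: "('a::field \<times> 'a \<times> 'a) set set" where
  "pg_points = {proj_pt x y z | x y z. (x, y, z) \<noteq> (0, 0, 0)}"

definition pg_line :: "'a::field \<Rightarrow> 'a \<Rightarrow> 'a \<Rightarrow> ('a \<times> 'a \<times> 'a) set set" where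
  "pg_line a b c = {proj_pt x y z | x y z. (x, y, z) \<noteq> (0, 0, 0) \<and> a * x + b * y + c * z = 0}"

definition pg_lines :: "('a::field \<times> 'a \<times> 'a) set set set" where
  "pg_lines = {pg_line a b c | a b c. (a, b, c) \<noteq> (0, 0, 0)}"

definition Fq :: "nat \<Rightarrow> 'a::field set" where
  "Fq q = {x. x ^ q = x}"

text \<open>Absolute trace F_q -> F_2 with q = 2^h.\<close>
definition abs_trace :: "nat \<Rightarrow> 'a::field \<Rightarrow> 'a" where
  "abs_trace h w = (\<Sum>i<h. w ^ (2 ^ i))"

definition unital_ab :: "nat \<Rightarrow> 'a::field \<Rightarrow> 'a \<Rightarrow> ('a \<times> 'a \<times> 'a) set set" where
  "unital_ab q \<alpha> \<beta> =
     {proj_pt x (\<alpha> * x ^ 2 + \<beta> * x ^ (q + 1) + r) 1 | x r. r \<in> Fq q} \<union> {proj_pt 0 1 0}"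

definition tangent_line :: "('a::field \<times> 'a \<times> 'a) set set \<Rightarrow> ('a \<times> 'a \<times> 'a) set set \<Rightarrow> bool" where
  "tangent_line U L \<longleftrightarrow> L \<in> pg_lines \<and> card (L \<inter> U) = 1"

definition pedal :: "('a::field \<times> 'a \<times> 'a) set set \<Rightarrow> ('a \<times> 'a \<times> 'a) set \<Rightarrow> ('a \<times> 'a \<times> 'a) set set" where
  "pedal U P = {T. \<exists>L. tangent_line U L \<and> P \<in> L \<and> T \<in> L \<inter> U}"

end

theory Submission imports Defs begin

lemma proj_self: "(x,y,z) \<in> proj_pt x y z"
  unfolding proj_pt_def by (rule CollectI, rule exI[of _ 1]) simp

lemma proj_eqD: "proj_pt x y z = proj_pt x' y' z' \<Longrightarrow> \<exists>c. c \<noteq> 0 \<and> x = c*x' \<and> y = c*y' \<and> z = c*z'"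
  using proj_self[of x y z] unfolding proj_pt_def by auto

lemma proj_eq_1: "proj_pt x y 1 = proj_pt x' y' 1 \<longleftrightarrow> x = x' \<and> y = y'"
  using proj_eqD[of x y 1 x' y' 1] by auto

lemma proj_ne_010: "proj_pt x y 1 \<noteq> proj_pt 0 1 0"
  using proj_eqD[of x y 1 0 1 0] by auto

lemma in_line: assumes "(x,y,z) \<noteq> (0,0,0)"
  shows "proj_pt x y z \<in> pg_line a b c \<longleftrightarrow> a*x+b*y+c*z = 0"
proof
  assume "proj_pt x y z \<in> pg_line a b c"
  then obtain x' y' z' where e: "proj_pt x y z = proj_pt x' y' z'" and l: "a*x'+b*y'+c*z' = 0"
    unfolding pg_line_def by auto
  from proj_eqD[OF e] obtain k where "x = k*x'" "y = k*y'" "z = k*z'" by blast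
  then have "a*x+b*y+c*z = k*(a*x'+b*y'+c*z')" by (simp add: algebra_simps)
  with l show "a*x+b*y+c*z = 0" by simp
next
  assume "a*x+b*y+c*z = 0"
  then show "proj_pt x y z \<in> pg_line a b c" using assms unfolding pg_line_def by blast
qed

lemma in_U: "P \<in> unital_ab q \<alpha> \<beta> \<longleftrightarrow> (\<exists>x r. r \<in> Fq q \<and> P = proj_pt x (\<alpha>*x^2+\<beta>*x^(q+1)+r) 1) \<or> P = proj_pt 0 1 0"
  unfolding unital_ab_def by auto

lemma ptU: "proj_pt x y 1 \<in> unital_ab q \<alpha> \<beta> \<longleftrightarrow> (y - \<alpha>*x^2 - \<beta>*x^(q+1)) \<in> Fq q"
  unfolding in_U proj_eq_1 using proj_ne_010 by (auto simp: algebra_simps)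

lemma fermat:
  fixes x :: "'a::{field,finite}" assumes "x \<noteq> 0"
  shows "x ^ (card (UNIV::'a set) - 1) = 1"
proof -
  let ?S = "UNIV - {0::'a}"
  have bij: "bij_betw (\<lambda>y. x*y) ?S ?S"
    by (rule bij_betw_byWitness[where f'="\<lambda>y. y / x"]) (use assms in auto)
  have "prod (\<lambda>y. x*y) ?S = prod id ?S"
    using prod.reindex_bij_betw[OF bij, of id] by simp
  moreover have "prod (\<lambda>y. x*y) ?S = x ^ card ?S * prod id ?S"
    by (simp add: prod.distrib)
  moreover have "prod id ?S \<noteq> 0" by simp
  moreover have "card ?S = card (UNIV::'a set) - 1" by (simp add: card_Diff_singleton)
  ultimately show ?thesis by simp
qed

lemma frob2:
  fixes x y :: "'a::comm_ring_1" assumes two: "(2::'a) = 0"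
  shows "(x+y)^(2^k) = x^(2^k) + y^(2^k)"
proof (induction k)
  case 0 then show ?case by simp
next
  case (Suc k)
  have "(x+y)^(2^Suc k) = ((x+y)^(2^k))^2" by (simp add: power_mult[symmetric] mult.commute)
  also have "\<dots> = (x^(2^k))^2 + (y^(2^k))^2 + 2*(x^(2^k)*y^(2^k))" using Suc by (simp add: power2_eq_square algebra_simps)
  also have "\<dots> = x^(2^Suc k) + y^(2^Suc k)" using two by (simp add: power_mult[symmetric] mult.commute)
  finally show ?case .
qed

locale ctx =
  fixes q :: nat and \<alpha> \<beta> \<delta> :: "'a::{field,finite}"
  assumes two: "(2::'a) = 0"
  and fadd: "\<And>x y::'a. (x+y)^q = x^q + y^q"
  and finv: "\<And>x::'a. (x^q)^q = x"
  and qpos: "0 < q"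
  and dq: "\<delta>^q = 1 + \<delta>"
  and aniso: "\<And>z. \<alpha>*z^2 + \<alpha>^q*(z^q)^2 + (\<beta>+\<beta>^q)*(z*z^q) = 0 \<Longrightarrow> z = 0"
begin

lemma neg: "-(x::'a) = x"
proof -
  have "x + x = 2*x" by simp
  then have "x + x = 0" using two by simp
  then show ?thesis by (simp add: add_eq_0_iff)
qed

lemma minus_plus: "(x::'a) - y = x + y"
  using neg[of y] by (metis diff_conv_add_uminus)

lemma char2I: "(a::'a) - b = 2*k \<Longrightarrow> a = b"
  using two by simp

lemma eq_iff_sum: "(a::'a) = b \<longleftrightarrow> a + b = 0"
  by (metis add_eq_0_iff neg)

lemma pw: "(x::'a)^(2*q) = (x^q)^2" "(x::'a)^(q+1) = x*x^q" "((x::'a)^2)^q = (x^q)^2"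
  "(0::'a)^q = 0" "(1::'a)^q = 1"
  by (simp_all add: power_mult[symmetric] mult.commute power_add qpos)

definition bb where "bb = \<beta> + \<beta>^q"
definition Qf where "Qf z = \<alpha>*z^2 + \<alpha>^q*(z^q)^2 + bb*(z*z^q)"
definition F where "F m x = Qf x + m*x + m^q*x^q + 1"

lemma bbq: "bb^q = bb"
  unfolding bb_def by (simp add: fadd finv add.commute)

lemma Qq: "(Qf z)^q = Qf z"
  unfolding Qf_def by (simp add: fadd finv bbq power_mult_distrib pw algebra_simps)

lemma Qaniso: "Qf z = 0 \<Longrightarrow> z = 0"
  using aniso unfolding Qf_def bb_def by blast

lemma delta_nz: "\<delta> \<noteq> 0"
  using dq pw(4) by force

lemma ptU': "proj_pt x (m*x+\<delta>) 1 \<in> unital_ab q \<alpha> \<beta> \<longleftrightarrow> F m x = 0"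
proof -
  define r where "r = m*x+\<delta> - \<alpha>*x^2 - \<beta>*x^(q+1)"
  have r2: "r = m*x+\<delta> + \<alpha>*x^2 + \<beta>*(x*x^q)" unfolding r_def by (simp add: minus_plus pw)
  have rq: "r^q = m^q*x^q + (1+\<delta>) + \<alpha>^q*(x^q)^2 + \<beta>^q*(x^q*x)"
    unfolding r2 by (simp add: fadd power_mult_distrib pw finv dq)
  have "r + r^q = F m x"
    apply (subst rq) unfolding r2 F_def Qf_def bb_def by (rule char2I[where k="\<delta>"]) algebra
  then have "r \<in> Fq q \<longleftrightarrow> F m x = 0"
    unfolding Fq_def using eq_iff_sum[of "r^q" r] by (simp add: add.commute)
  then show ?thesis unfolding ptU r_def .
qed

lemma Fshift: "F m (x+z) = F m x + Qf z + (m + bb*x^q)*z + (m^q + bb*x)*z^q"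
  unfolding F_def Qf_def fadd[of x z] by (rule char2I[where k="\<alpha>*x*z + \<alpha>^q*x^q*z^q"]) algebra


lemma dbl: "(a::'a) + a = 0"
  using eq_iff_sum by blast

lemma line_pt: assumes b: "b \<noteq> 0" and c: "c = b*\<delta>"
  shows "proj_pt x y 1 \<in> pg_line a b c \<longleftrightarrow> y = (a/b)*x + \<delta>"
proof -
  have "proj_pt x y 1 \<in> pg_line a b c \<longleftrightarrow> a*x + b*y + c*1 = 0" by (rule in_line) simp
  also have "a*x + b*y + c*1 = b*(y + ((a/b)*x + \<delta>))" using b c by (simp add: field_simps)
  also have "\<dots> = 0 \<longleftrightarrow> y + ((a/b)*x + \<delta>) = 0" using b by simp
  also have "\<dots> \<longleftrightarrow> y = (a/b)*x + \<delta>" using eq_iff_sum by blast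
  finally show ?thesis .
qed

lemma notin_010: "b \<noteq> 0 \<Longrightarrow> proj_pt 0 1 0 \<notin> pg_line a b c"
  by (subst in_line) auto

lemma key_y: assumes E: "1 + Qf x = 0"
  shows "bb*x^q*x + \<delta> = \<alpha>*x^2 + \<alpha>^q*x^(2*q) + \<delta>^q"
proof -
  have "bb*x^q*x + \<delta> - (\<alpha>*x^2 + \<alpha>^q*x^(2*q) + \<delta>^q) = 2*(bb*x*x^q) - (1 + Qf x)"
    unfolding Qf_def pw dq by algebra
  then have "bb*x^q*x + \<delta> - (\<alpha>*x^2 + \<alpha>^q*x^(2*q) + \<delta>^q) = 2*(bb*x*x^q)"
    by (simp only: E diff_zero)
  then show ?thesis by (rule char2I)
qed

lemma key_F: "F (bb*x^q) x = 1 + Qf x"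
proof -
  have mq: "(bb*x^q)^q = bb*x" by (simp add: power_mult_distrib bbq finv)
  show ?thesis unfolding F_def mq by (rule char2I[where k="bb*x*x^q"]) algebra
qed

lemma E_conv: "(1 + \<alpha>*x^2 + \<alpha>^q*x^(2*q) + (\<beta>+\<beta>^q)*x^(q+1) = 0) \<longleftrightarrow> 1 + Qf x = 0"
  unfolding Qf_def bb_def pw by (simp add: add.assoc)

theorem pedal_eq: "pedal (unital_ab q \<alpha> \<beta>) (proj_pt 0 \<delta> 1) =
   {proj_pt x (\<alpha>*x^2 + \<alpha>^q*x^(2*q) + \<delta>^q) 1 | x. 1 + \<alpha>*x^2 + \<alpha>^q*x^(2*q) + (\<beta>+\<beta>^q)*x^(q+1) = 0}"
  (is "?P = ?S")
proof
  show "?P \<subseteq> ?S"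
  proof
    fix T assume "T \<in> ?P"
    then obtain L where tl: "tangent_line (unital_ab q \<alpha> \<beta>) L" and RL: "proj_pt 0 \<delta> 1 \<in> L"
      and TL: "T \<in> L" and TU: "T \<in> unital_ab q \<alpha> \<beta>" unfolding pedal_def by blast
    from tl have "L \<in> pg_lines" and c1: "card (L \<inter> unital_ab q \<alpha> \<beta>) = 1" unfolding tangent_line_def by auto
    then obtain a b c where L: "L = pg_line a b c" and nz: "(a,b,c) \<noteq> (0,0,0)" unfolding pg_lines_def by blast
    from c1 obtain t where "L \<inter> unital_ab q \<alpha> \<beta> = {t}" by (auto simp: card_1_singleton_iff)
    with TL TU have uniq: "\<And>P. P \<in> L \<Longrightarrow> P \<in> unital_ab q \<alpha> \<beta> \<Longrightarrow> P = T" by blast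
    from RL have "b*\<delta> + c = 0" unfolding L by (subst (asm) in_line) auto
    hence c: "c = b*\<delta>" using eq_iff_sum[of c "b*\<delta>"] by (simp add: add.commute)
    have b: "b \<noteq> 0"
    proof
      assume b0: "b = 0"
      hence c0: "c = 0" using c by simp
      have U0: "proj_pt 0 0 1 \<in> unital_ab q \<alpha> \<beta>" unfolding ptU Fq_def by (simp add: pw qpos)
      have U1: "proj_pt 0 1 1 \<in> unital_ab q \<alpha> \<beta>" unfolding ptU Fq_def by (simp add: pw qpos)
      have L0: "proj_pt 0 0 1 \<in> L" unfolding L using b0 c0 by (subst in_line) simp_all
      have L1: "proj_pt 0 1 1 \<in> L" unfolding L using b0 c0 by (subst in_line) simp_all
      have "proj_pt 0 0 1 = proj_pt (0::'a) 1 1" using uniq[OF L0 U0] uniq[OF L1 U1] by simp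
      then show False unfolding proj_eq_1 by simp
    qed
    define m where "m = a/b"
    have onL: "\<And>x y. proj_pt x y 1 \<in> L \<longleftrightarrow> y = m*x + \<delta>" unfolding L m_def using line_pt[OF b c] .
    have "T \<noteq> proj_pt 0 1 0" using notin_010[OF b] TL L by auto
    with TU obtain x0 r where T: "T = proj_pt x0 (\<alpha>*x0^2+\<beta>*x0^(q+1)+r) 1" by (auto simp: in_U)
    with TL onL have T': "T = proj_pt x0 (m*x0+\<delta>) 1" by simp
    hence F0: "F m x0 = 0" using TU ptU' by simp
    have pts: "\<And>x. F m x = 0 \<Longrightarrow> x = x0"
    proof -
      fix x assume "F m x = 0"
      hence "proj_pt x (m*x+\<delta>) 1 = T" using uniq onL ptU' by simp
      thus "x = x0" using T' by (simp add: proj_eq_1)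
    qed
    define d where "d = m + bb*x0^q"
    have d0: "d = 0"
    proof (rule ccontr)
      assume dnz: "d \<noteq> 0"
      define u where "u = \<delta>/d"
      have unz: "u \<noteq> 0" using dnz delta_nz unfolding u_def by simp
      have Qu: "Qf u \<noteq> 0" using Qaniso unz by blast
      define t where "t = 1 / Qf u"
      have tq: "t^q = t" unfolding t_def by (simp add: power_one_over Qq)
      have tnz: "t \<noteq> 0" using Qu t_def by simp
      have du: "d*u = \<delta>" using dnz u_def by simp
      have duq: "d^q*u^q = 1 + \<delta>" by (metis du dq power_mult_distrib)
      have dq': "d^q = m^q + bb*x0" unfolding d_def by (simp add: fadd power_mult_distrib bbq finv)
      have Qtu: "Qf (t*u) = t^2 * Qf u" unfolding Qf_def power_mult_distrib tq by algebra
      have "F m (x0 + t*u) = F m x0 + Qf (t*u) + d*(t*u) + d^q*(t*u)^q"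
        using Fshift[of m x0 "t*u"] dq' d_def by simp
      also have "\<dots> = t^2 * Qf u + t*(d*u) + t*(d^q*u^q)" using F0 Qtu tq by (simp add: power_mult_distrib algebra_simps)
      also have "\<dots> = t + t*\<delta> + t*(1+\<delta>)" using Qu t_def du duq by (simp add: power2_eq_square)
      also have "\<dots> = 0" by (rule char2I[where k="t + t*\<delta>"]) algebra
      finally have "x0 + t*u = x0" using pts by blast
      then show False using tnz unz by simp
    qed
    hence m: "m = bb*x0^q" using eq_iff_sum[of m "bb*x0^q"] d_def by simp
    have E: "1 + Qf x0 = 0" using F0 key_F unfolding m by simp
    show "T \<in> ?S"
      using T' key_y[OF E] E_conv[of x0] E unfolding m by (auto simp: mult.commute)
  qed
next
  show "?S \<subseteq> ?P"
  proof
    fix T assume "T \<in> ?S"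
    then obtain x where T: "T = proj_pt x (\<alpha>*x^2 + \<alpha>^q*x^(2*q) + \<delta>^q) 1"
      and Ex: "1 + \<alpha>*x^2 + \<alpha>^q*x^(2*q) + (\<beta>+\<beta>^q)*x^(q+1) = 0" by blast
    have E: "1 + Qf x = 0" using Ex E_conv by blast
    define m where "m = bb*x^q"
    have mq: "m^q = bb*x" unfolding m_def by (simp add: power_mult_distrib bbq finv)
    have T': "T = proj_pt x (m*x+\<delta>) 1" unfolding T m_def key_y[OF E, symmetric] by (simp add: mult.commute)
    have F0: "F m x = 0" unfolding m_def key_F using E .
    define L where "L = pg_line m 1 \<delta>"
    have onL: "\<And>x y. proj_pt x y 1 \<in> L \<longleftrightarrow> y = m*x+\<delta>" using line_pt[where b=1 and c=\<delta> and a=m] unfolding L_def by simp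
    have LU: "L \<inter> unital_ab q \<alpha> \<beta> = {T}"
    proof
      show "{T} \<subseteq> L \<inter> unital_ab q \<alpha> \<beta>" using T' onL ptU' F0 by simp
      show "L \<inter> unital_ab q \<alpha> \<beta> \<subseteq> {T}"
      proof
        fix P assume P: "P \<in> L \<inter> unital_ab q \<alpha> \<beta>"
        have "P \<noteq> proj_pt 0 1 0" using notin_010[of 1 m \<delta>] P unfolding L_def by auto
        with P obtain x1 r where P1: "P = proj_pt x1 (\<alpha>*x1^2+\<beta>*x1^(q+1)+r) 1" by (auto simp: in_U)
        with P onL have P': "P = proj_pt x1 (m*x1+\<delta>) 1" by simp
        with P ptU' have F1: "F m x1 = 0" by simp
        have e1: "m + bb*x^q = 0" "m^q + bb*x = 0" unfolding mq by (simp_all add: m_def dbl)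
        have "F m (x + (x1 - x)) = F m x + Qf (x1 - x) + (m + bb*x^q)*(x1-x) + (m^q + bb*x)*(x1-x)^q"
          by (rule Fshift)
        then have "Qf (x1 - x) = 0" using F0 F1 e1 by simp
        then have "x1 - x = 0" by (rule Qaniso)
        then have "x1 = x" by simp
        then show "P \<in> {T}" using P' T' by simp
      qed
    qed
    have RL: "proj_pt 0 \<delta> 1 \<in> L" unfolding L_def by (subst in_line) (simp_all add: dbl)
    have "L \<in> pg_lines" unfolding L_def pg_lines_def
      by (rule CollectI, intro exI[of _ m] exI[of _ 1] exI[of _ \<delta>]) simp
    then show "T \<in> ?P" unfolding pedal_def tangent_line_def using LU RL by auto
  qed
qed

theorem part2: "\<forall>P \<in> pedal (unital_ab q \<alpha> \<beta>) (proj_pt 0 \<delta> 1).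
            \<exists>B \<in> {proj_pt 0 (s + \<delta> ^ q) 1 | s. s \<in> Fq q} \<union> {proj_pt 0 1 0}.
              \<exists>L \<in> pg_lines. proj_pt 1 0 0 \<in> L \<and> B \<in> L \<and> P \<in> L"
proof
  fix P assume "P \<in> pedal (unital_ab q \<alpha> \<beta>) (proj_pt 0 \<delta> 1)"
  then obtain x where P: "P = proj_pt x (\<alpha>*x^2 + \<alpha>^q*x^(2*q) + \<delta>^q) 1" unfolding pedal_eq by blast
  define s where "s = \<alpha>*x^2 + \<alpha>^q*x^(2*q)"
  have "s \<in> Fq q" unfolding Fq_def s_def pw by (simp add: fadd power_mult_distrib finv pw add.commute)
  define k where "k = s + \<delta>^q"
  define L where "L = pg_line 0 1 k"
  have "L \<in> pg_lines" unfolding L_def pg_lines_def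
    by (rule CollectI, intro exI[of _ 0] exI[of _ 1] exI[of _ k]) simp
  moreover have "proj_pt 1 0 0 \<in> L" unfolding L_def by (subst in_line) simp_all
  moreover have "proj_pt 0 k 1 \<in> L" unfolding L_def by (subst in_line) (simp_all add: dbl)
  moreover have "P \<in> L" unfolding L_def P by (subst in_line) (simp_all add: dbl s_def k_def add.assoc)
  moreover have "proj_pt 0 k 1 \<in> {proj_pt 0 (s + \<delta> ^ q) 1 | s. s \<in> Fq q} \<union> {proj_pt 0 1 0}"
    using \<open>s \<in> Fq q\<close> k_def by blast
  ultimately show "\<exists>B \<in> {proj_pt 0 (s + \<delta> ^ q) 1 | s. s \<in> Fq q} \<union> {proj_pt 0 1 0}.
              \<exists>L \<in> pg_lines. proj_pt 1 0 0 \<in> L \<and> B \<in> L \<and> P \<in> L" by blast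
qed

end

lemma c2_minus: fixes a b :: "'a::comm_ring_1" shows "(2::'a) = 0 \<Longrightarrow> a - b = a + b"
proof -
  assume two: "(2::'a) = 0"
  have "b + b = 0" by (metis mult_2 mult_zero_left two)
  then have "-b = b" by (simp add: add_eq_0_iff)
  then show ?thesis by (metis diff_conv_add_uminus)
qed

lemma aniso_lemma:
  fixes \<alpha> \<beta> z :: "'a::field"
  assumes two: "(2::'a)=0" and fadd: "\<And>x y::'a. (x+y)^q = x^q+y^q" and finv: "\<And>x::'a. (x^q)^q = x"
   and hq: "q = 2^h" and bnz: "\<beta>^q + \<beta> \<noteq> 0" and tr0: "abs_trace h (\<alpha>^(q+1)/(\<beta>^q+\<beta>)^2) = 0"
   and Q0: "\<alpha>*z^2 + \<alpha>^q*(z^q)^2 + (\<beta>+\<beta>^q)*(z*z^q) = 0"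
  shows "z = 0"
proof (rule ccontr)
  assume z: "z \<noteq> 0"
  define b where "b = \<beta>^q + \<beta>"
  have bq: "b^q = b" unfolding b_def by (simp add: fadd finv add.commute)
  define n where "n = z*z^q"
  have nq: "n^q = n" unfolding n_def by (simp add: power_mult_distrib finv mult.commute)
  have nnz: "n \<noteq> 0" unfolding n_def using z by simp
  have bnz': "b \<noteq> 0" using bnz b_def by simp
  have sq: "(z^2)^q = (z^q)^2" by (simp add: power_mult[symmetric] mult.commute)
  define w where "w = \<alpha>*z^2/(b*n)"
  have wq: "w^q = \<alpha>^q*(z^q)^2/(b*n)" unfolding w_def by (simp add: power_divide power_mult_distrib bq nq sq)
  have bb: "\<beta>+\<beta>^q = b" by (simp add: b_def add.commute)
  have Q1: "\<alpha>*z^2 + \<alpha>^q*(z^q)^2 + b*n = 0" using Q0 unfolding bb n_def .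
  have A: "\<alpha>*z^2 + \<alpha>^q*(z^q)^2 = b*n"
  proof -
    have "\<alpha>*z^2 + \<alpha>^q*(z^q)^2 = - (b*n)" using Q1 by (simp add: eq_neg_iff_add_eq_0)
    moreover have "- (b*n) = b*n" using c2_minus[OF two, of 0 "b*n"] by simp
    ultimately show ?thesis by simp
  qed
  have sum: "w + w^q = 1" apply (subst wq) unfolding w_def using A bnz' nnz by (simp add: add_divide_distrib[symmetric])
  have "w^q = 1 - w" using sum by (simp add: algebra_simps)
  then have wq2: "w^q = w + 1" using c2_minus[OF two, of 1 w] by (simp add: add.commute)
  have "w*w^q = (\<alpha>*\<alpha>^q)*(z^2*(z^q)^2)/((b*n)*(b*n))" apply (subst wq) unfolding w_def by simp
  also have "z^2*(z^q)^2 = n*n" unfolding n_def by (simp add: power2_eq_square algebra_simps)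
  also have "(\<alpha>*\<alpha>^q)*(n*n)/((b*n)*(b*n)) = \<alpha>^(q+1)/b^2" using nnz bnz'
    by (simp add: power_add power2_eq_square field_simps)
  finally have c: "\<alpha>^(q+1)/(\<beta>^q+\<beta>)^2 = w^2 + w" unfolding b_def[symmetric] wq2
    by (simp add: power2_eq_square algebra_simps)
  have "abs_trace h (w^2 + w) = (\<Sum>i<h. w^(2^Suc i) - w^(2^i))"
    unfolding abs_trace_def
  proof (rule sum.cong[OF refl])
    fix i
    have "(w^2 + w)^(2^i) = (w^2)^(2^i) + w^(2^i)" by (rule frob2[OF two])
    also have "(w^2)^(2^i) = w^(2^Suc i)" by (simp add: power_mult[symmetric])
    finally show "(w^2 + w)^(2^i) = w^(2^Suc i) - w^(2^i)" using c2_minus[OF two] by simp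
  qed
  also have "\<dots> = w^(2^h) - w^(2^0)" by (rule sum_lessThan_telescope)
  also have "\<dots> = w^q + w" using c2_minus[OF two] hq by simp
  also have "\<dots> = 1" using sum by (simp add: add.commute)
  finally show False using tr0 c by simp
qed

theorem lemma3p2:
  fixes \<alpha> \<beta> \<delta> v :: "'a::{field,finite}" and q h :: nat
  assumes hq: "q = 2 ^ h" and q4: "q \<ge> 4"
    and card: "card (UNIV :: 'a set) = q ^ 2"
    and delta_q: "\<delta> ^ q = 1 + \<delta>" and delta_sq: "\<delta> ^ 2 = v + \<delta>"
    and v_Fq: "v \<in> Fq q" and v_ne1: "v \<noteq> 1" and v_tr: "abs_trace h v = 1"
    and alpha_nz: "\<alpha> \<noteq> 0" and beta_nFq: "\<beta> \<notin> Fq q"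
    and tr0: "abs_trace h (\<alpha> ^ (q + 1) / (\<beta> ^ q + \<beta>) ^ 2) = 0"
  shows "pedal (unital_ab q \<alpha> \<beta>) (proj_pt 0 \<delta> 1) =
           {proj_pt x (\<alpha> * x ^ 2 + \<alpha> ^ q * x ^ (2 * q) + \<delta> ^ q) 1 | x.
              1 + \<alpha> * x ^ 2 + \<alpha> ^ q * x ^ (2 * q) + (\<beta> + \<beta> ^ q) * x ^ (q + 1) = 0}
       \<and> (\<forall>P \<in> pedal (unital_ab q \<alpha> \<beta>) (proj_pt 0 \<delta> 1).
            \<exists>B \<in> {proj_pt 0 (s + \<delta> ^ q) 1 | s. s \<in> Fq q} \<union> {proj_pt 0 1 0}.
              \<exists>L \<in> pg_lines. proj_pt 1 0 0 \<in> L \<and> B \<in> L \<and> P \<in> L)"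
proof -
  have qpos: "0 < q" using q4 by simp
  have ferm: "x^(q^2) = x" for x :: 'a
  proof (cases "x = 0")
    case True then show ?thesis using qpos by simp
  next
    case False
    have qq: "q^2 = Suc (q^2 - 1)" using qpos by simp
    have "x^(q^2) = x^(q^2 - 1) * x" by (subst qq) (rule power_Suc2)
    also have "x^(q^2 - 1) = 1" using fermat[OF False] card by simp
    finally show ?thesis by simp
  qed
  have two: "(2::'a) = 0"
  proof -
    have "h \<noteq> 0" using q4 hq by (cases h) auto
    then have "even q" using hq by simp
    then have "even (q^2)" by simp
    moreover have "q^2 \<ge> 1" using qpos by simp
    ultimately have o: "odd (q^2 - 1)" using qpos by simp
    have "(-1::'a)^(q^2 - 1) = 1" using fermat[of "-1::'a"] card by simp
    moreover have "(-1::'a)^(q^2 - 1) = -1" using o by simp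
    ultimately have "(-1::'a) = 1" by simp
    then show ?thesis by (metis one_add_one add.right_inverse)
  qed
  have fadd: "\<And>x y::'a. (x+y)^q = x^q + y^q" using frob2[OF two] hq by simp
  have finv: "\<And>x::'a. (x^q)^q = x" using ferm by (simp add: power_mult[symmetric] power2_eq_square)
  have bnz: "\<beta>^q + \<beta> \<noteq> 0"
  proof
    assume "\<beta>^q + \<beta> = 0"
    then have "\<beta>^q = - \<beta>" by (simp add: eq_neg_iff_add_eq_0)
    also have "- \<beta> = \<beta>" using c2_minus[OF two, of 0 \<beta>] by simp
    finally show False using beta_nFq unfolding Fq_def by simp
  qed
  have aniso: "\<And>z. \<alpha>*z^2 + \<alpha>^q*(z^q)^2 + (\<beta>+\<beta>^q)*(z*z^q) = 0 \<Longrightarrow> z = 0"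
    using aniso_lemma[OF two fadd finv hq bnz tr0] by blast
  interpret ctx q \<alpha> \<beta> \<delta>
    apply unfold_locales
    apply (rule two) apply (rule fadd) apply (rule finv) apply (rule qpos) apply (rule delta_q)
    apply (erule aniso) done
  show ?thesis using pedal_eq part2 by simp
qed

end
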